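(* Let $\theta \in [0,1] \setminus \mathbb{Q}$ and let $m, n \in \mathbb{Z}$ with $0 < m < n$. Define $h, k \colon (S^1)^3 \to (S^1)^3$ by \[ h(\zeta_1, \zeta_2, \zeta_3) = \big(e^{2\pi i\theta}\zeta_1,\ \zeta_1^m\zeta_2,\ \zeta_2^n\zeta_3\big), \qquad k(\zeta_1, \zeta_2, \zeta_3) = \big(e^{2\pi i\theta}\zeta_1,\ \zeta_1^n\zeta_2,\ \zeta_2^m\zeta_3\big). \] Then $h$ and $k$ are not flip conjugate, that is, there is no homeomorphism $g$ of $(S^1)^3$ with $g \circ h \circ g^{-1} = k$ or $g \circ h \circ g^{-1} = k^{-1}$.
   Context: Flip conjugacy: homeomorphisms $h_1 \colon X_1 \to X_1$ and $h_2 \colon X_2 \to X_2$ are conjugate if there is a homeomorphism $g \colon X_1 \to X_2$ with $g \circ h_1 \circ g^{-1} = h_2$. They are flip conjugate if $h_1$ is conjugate to $h_2$ or to $h_2^{-1}$. *)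

theory Defs
  imports "HOL-Analysis.Analysis"
begin

definition torus3 :: "(complex \<times> complex \<times> complex) set" where
  "torus3 = {(z1, z2, z3). cmod z1 = 1 \<and> cmod z2 = 1 \<and> cmod z3 = 1}"

definition conjugate_on :: "'a::topological_space set \<Rightarrow> ('a \<Rightarrow> 'a) \<Rightarrow>
    'b::topological_space set \<Rightarrow> ('b \<Rightarrow> 'b) \<Rightarrow> bool" where
  "conjugate_on X1 h1 X2 h2 \<longleftrightarrow>
     (\<exists>g g'. homeomorphism X1 X2 g g' \<and> (\<forall>y\<in>X2. g (h1 (g' y)) = h2 y))"

definition flip_conjugate_on :: "'a::topological_space set \<Rightarrow> ('a \<Rightarrow> 'a) \<Rightarrow>
    'b::topological_space set \<Rightarrow> ('b \<Rightarrow> 'b) \<Rightarrow> bool" where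
  "flip_conjugate_on X1 h1 X2 h2 \<longleftrightarrow>
     conjugate_on X1 h1 X2 h2 \<or> conjugate_on X1 h1 X2 (inv_into X2 h2)"

definition skew3 :: "real \<Rightarrow> int \<Rightarrow> int \<Rightarrow> complex \<times> complex \<times> complex \<Rightarrow> complex \<times> complex \<times> complex" where
  "skew3 \<theta> a b = (\<lambda>(z1, z2, z3). (exp (2 * pi * \<i> * complex_of_real \<theta>) * z1, z1 powi a * z2, z2 powi b * z3))"

end

theory Submission
  imports Defs
begin


definition chi :: "int \<Rightarrow> int \<Rightarrow> int \<Rightarrow> complex \<times> complex \<times> complex \<Rightarrow> complex" where
  "chi a b c = (\<lambda>(z1, z2, z3). z1 powi a * z2 powi b * z3 powi c)"

definition rep :: "(complex \<times> complex \<times> complex \<Rightarrow> complex) \<Rightarrow> int \<Rightarrow> int \<Rightarrow> int \<Rightarrow> bool" where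
  "rep u a b c \<longleftrightarrow> (\<exists>f. continuous_on torus3 f \<and> (\<forall>x\<in>torus3. u x = chi a b c x * exp (f x)))"

lemma torus3_nz:
  assumes "x \<in> torus3" shows "fst x \<noteq> 0" "fst (snd x) \<noteq> 0" "snd (snd x) \<noteq> 0"
  using assms by (auto simp: torus3_def)

lemma chi_nz: "x \<in> torus3 \<Longrightarrow> chi a b c x \<noteq> 0"
  by (auto simp: torus3_def chi_def)

lemma exp_one_const:
  fixes D :: "'a::topological_space \<Rightarrow> complex"
  assumes S: "connected S" and D: "continuous_on S D" and e: "\<And>t. t \<in> S \<Longrightarrow> exp (D t) = 1"
    and s: "s \<in> S" and t: "t \<in> S"
  shows "D s = D t"
proof -
  have "D constant_on S"
  proof (rule continuous_discrete_range_constant[OF S D])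
    fix x assume x: "x \<in> S"
    show "\<exists>e>0. \<forall>y. y \<in> S \<and> D y \<noteq> D x \<longrightarrow> e \<le> norm (D y - D x)"
    proof (intro exI[of _ "2*pi"] conjI allI impI)
      fix y assume y: "y \<in> S \<and> D y \<noteq> D x"
      have "exp (D y - D x) = 1" using e[of x] e[of y] x y by (simp add: exp_diff)
      then obtain k :: int where k: "Re (D y - D x) = 0" "Im (D y - D x) = of_int (2*k) * pi"
        by (auto simp: exp_eq_1)
      have "k \<noteq> 0" using k y by (metis complex_eq_iff mult_eq_0_iff of_int_0 right_minus_eq zero_complex.simps(1,2) mult_zero_right)
      hence "1 \<le> \<bar>real_of_int k\<bar>" by linarith
      hence "2*pi \<le> \<bar>Im (D y - D x)\<bar>" using k pi_gt_zero by (simp add: abs_mult)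
      also have "\<dots> \<le> norm (D y - D x)" by (rule abs_Im_le_cmod)
      finally show "2*pi \<le> norm (D y - D x)" .
    qed (simp add: pi_gt_zero)
  qed
  thus ?thesis using s t by (auto simp: constant_on_def)
qed

lemma circle_no_log:
  fixes a :: int
  assumes c: "continuous_on (sphere 0 1) \<phi>" and e: "\<And>z. z \<in> sphere (0::complex) 1 \<Longrightarrow> z powi a = exp (\<phi> z)"
  shows "a = 0"
proof -
  define \<psi> where "\<psi> t = \<phi> (exp (\<i> * of_real t)) - \<i> * of_int a * of_real t" for t :: real
  have cont: "continuous_on UNIV \<psi>" unfolding \<psi>_def
    by (intro continuous_intros continuous_on_compose2[OF c]) auto
  have e1: "exp (\<psi> t) = 1" for t
  proof -
    have "exp (\<phi> (exp (\<i> * of_real t))) = exp (\<i> * of_real t) powi a" using e[of "exp (\<i> * of_real t)"] by simp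
    also have "\<dots> = exp (of_int a * (\<i> * of_real t))" by (simp add: exp_power_int)
    finally show ?thesis unfolding \<psi>_def by (simp add: exp_diff mult.commute mult.left_commute)
  qed
  have "\<psi> (2*pi) = \<psi> 0" by (rule exp_one_const[of UNIV \<psi>, OF connected_UNIV cont e1]) auto
  moreover have "exp (\<i> * of_real (2*pi)) = 1" by (simp add: exp_eq_1)
  ultimately have "\<i> * of_int a * of_real (2*pi) = 0" unfolding \<psi>_def by simp
  thus ?thesis by simp
qed

lemma torus_no_log:
  assumes c: "continuous_on torus3 f" and e: "\<And>x. x \<in> torus3 \<Longrightarrow> chi a b c x = exp (f x)"
  shows "a = 0 \<and> b = 0 \<and> c = 0"
proof (intro conjI)
  have cc: "continuous_on (sphere 0 1) (\<lambda>z. f (g z))" if "continuous_on (sphere 0 1) g" "g ` sphere 0 1 \<subseteq> torus3" for g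
    by (rule continuous_on_compose2[OF c that])
  show "a = 0"
    by (rule circle_no_log[of "\<lambda>z. f (z,1,1)"], rule cc, (intro continuous_intros; fail),
        (auto simp: torus3_def)[1], (subst e[symmetric]; auto simp: torus3_def chi_def))
  show "b = 0"
    by (rule circle_no_log[of "\<lambda>z. f (1,z,1)"], rule cc, (intro continuous_intros; fail),
        (auto simp: torus3_def)[1], (subst e[symmetric]; auto simp: torus3_def chi_def))
  show "c = 0"
    by (rule circle_no_log[of "\<lambda>z. f (1,1,z)"], rule cc, (intro continuous_intros; fail),
        (auto simp: torus3_def)[1], (subst e[symmetric]; auto simp: torus3_def chi_def))
qed



lemma rep_cong: "rep u a b c \<Longrightarrow> (\<And>x. x \<in> torus3 \<Longrightarrow> u x = v x) \<Longrightarrow> rep v a b c"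
  unfolding rep_def by auto

lemma rep_chi: "rep (chi a b c) a b c"
  unfolding rep_def by (intro exI[of _ "\<lambda>_. 0"]) auto

lemma rep_const: "k \<noteq> 0 \<Longrightarrow> rep (\<lambda>_. k) 0 0 0"
  unfolding rep_def by (intro exI[of _ "\<lambda>_. Ln k"]) (auto simp: chi_def)

lemma chi_add: "x \<in> torus3 \<Longrightarrow> chi (a+a') (b+b') (c+c') x = chi a b c x * chi a' b' c' x"
proof -
  assume x: "x \<in> torus3"
  obtain z1 z2 z3 where xe: "x = (z1,z2,z3)" by (cases x) auto
  have "z1 \<noteq> 0" "z2 \<noteq> 0" "z3 \<noteq> 0" using x xe by (auto simp: torus3_def)
  thus ?thesis by (simp add: xe chi_def power_int_add mult_ac)
qed

lemma chi_mult: "chi a b c x powi k = chi (k*a) (k*b) (k*c) x"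
  by (auto simp: chi_def power_int_mult_distrib mult.commute[of k] power_int_mult split: prod.splits)

lemma rep_mult: "rep u a b c \<Longrightarrow> rep v a' b' c' \<Longrightarrow> rep (\<lambda>x. u x * v x) (a+a') (b+b') (c+c')"
  unfolding rep_def
proof (elim exE conjE)
  fix f g assume f: "continuous_on torus3 f" "\<forall>x\<in>torus3. u x = chi a b c x * exp (f x)"
    and g: "continuous_on torus3 g" "\<forall>x\<in>torus3. v x = chi a' b' c' x * exp (g x)"
  show "\<exists>f. continuous_on torus3 f \<and> (\<forall>x\<in>torus3. u x * v x = chi (a + a') (b + b') (c + c') x * exp (f x))"
    by (intro exI[of _ "\<lambda>x. f x + g x"] conjI continuous_intros f g ballI)
       (simp add: f g chi_add exp_add)
qed

lemma rep_powi: "rep u a b c \<Longrightarrow> rep (\<lambda>x. u x powi k) (k*a) (k*b) (k*c)"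
  unfolding rep_def
proof (elim exE conjE)
  fix f assume f: "continuous_on torus3 f" "\<forall>x\<in>torus3. u x = chi a b c x * exp (f x)"
  show "\<exists>f. continuous_on torus3 f \<and> (\<forall>x\<in>torus3. u x powi k = chi (k*a) (k*b) (k*c) x * exp (f x))"
    by (intro exI[of _ "\<lambda>x. of_int k * f x"] conjI continuous_intros f ballI)
       (simp add: f power_int_mult_distrib chi_mult exp_power_int)
qed

lemma rep_comp:
  assumes "rep u a b c" "continuous_on torus3 G" "G ` torus3 \<subseteq> torus3"
    "rep (\<lambda>x. chi a b c (G x)) a' b' c'"
  shows "rep (\<lambda>x. u (G x)) a' b' c'"
proof -
  obtain f where f: "continuous_on torus3 f" "\<forall>x\<in>torus3. u x = chi a b c x * exp (f x)"
    using assms(1) unfolding rep_def by blast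
  obtain f' where f': "continuous_on torus3 f'" "\<forall>x\<in>torus3. chi a b c (G x) = chi a' b' c' x * exp (f' x)"
    using assms(4) unfolding rep_def by blast
  have c: "continuous_on torus3 (\<lambda>x. f (G x))"
    by (rule continuous_on_compose2[OF f(1) assms(2) assms(3)])
  show ?thesis unfolding rep_def
    by (intro exI[of _ "\<lambda>x. f' x + f (G x)"] conjI continuous_intros c f' ballI)
       (use assms(3) f f' in \<open>auto simp: exp_add\<close>)
qed

lemma rep_unique:
  assumes "rep u a b c" "rep u a' b' c'" shows "a = a' \<and> b = b' \<and> c = c'"
proof -
  obtain f where f: "continuous_on torus3 f" "\<forall>x\<in>torus3. u x = chi a b c x * exp (f x)"
    using assms(1) unfolding rep_def by blast
  obtain f' where f': "continuous_on torus3 f'" "\<forall>x\<in>torus3. u x = chi a' b' c' x * exp (f' x)"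
    using assms(2) unfolding rep_def by blast
  have "chi (a - a') (b - b') (c - c') x = exp (f' x - f x)" if x: "x \<in> torus3" for x
  proof -
    have e: "chi a b c x * exp (f x) = chi a' b' c' x * exp (f' x)" using f f' x by auto
    have "chi a b c x = chi (a - a') (b - b') (c - c') x * chi a' b' c' x"
      using chi_add[OF x, where a="a-a'" and a'=a' and b="b-b'" and b'=b' and c="c-c'" and c'=c'] by simp
    with e have "chi (a - a') (b - b') (c - c') x * chi a' b' c' x * exp (f x) = chi a' b' c' x * exp (f' x)" by simp
    with chi_nz[OF x, of a' b' c'] show ?thesis by (simp add: exp_diff field_simps)
  qed
  from torus_no_log[OF continuous_on_diff[OF f'(1) f(1)] this] show ?thesis by simp
qed

lemma skew3_alt: "skew3 \<theta> a b = (\<lambda>x. (exp (2 * pi * \<i> * complex_of_real \<theta>) * fst x,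
   fst x powi a * fst (snd x), fst (snd x) powi b * snd (snd x)))"
  by (auto simp: skew3_def)

lemma skew_T: "x \<in> torus3 \<Longrightarrow> skew3 \<theta> a b x \<in> torus3"
  by (auto simp: skew3_def torus3_def norm_mult norm_power_int)

lemma skew_T': "skew3 \<theta> a b ` torus3 \<subseteq> torus3"
  using skew_T by blast

lemma skew_cont: "continuous_on torus3 (skew3 \<theta> a b)"
  unfolding skew3_alt
  by (intro continuous_intros) (auto dest: torus3_nz)

lemma skew_surj: "y \<in> torus3 \<Longrightarrow> \<exists>x\<in>torus3. skew3 \<theta> a b x = y"
proof -
  assume y: "y \<in> torus3"
  obtain w1 w2 w3 where w: "y = (w1, w2, w3)" by (cases y) auto
  define e where "e = exp (2 * pi * \<i> * complex_of_real \<theta>)"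
  have e: "e \<noteq> 0" "norm e = 1" unfolding e_def by (auto simp: mult.commute[of _ \<i>] mult.assoc)
  define z1 where "z1 = w1 / e"
  define z2 where "z2 = w2 / z1 powi a"
  define z3 where "z3 = w3 / z2 powi b"
  have n: "norm w1 = 1" "norm w2 = 1" "norm w3 = 1" using y w by (auto simp: torus3_def)
  have n1: "norm z1 = 1" using n e by (simp add: z1_def norm_divide)
  have n2: "norm z2 = 1" using n n1 by (simp add: z2_def norm_divide norm_power_int)
  have n3: "norm z3 = 1" using n n2 by (simp add: z3_def norm_divide norm_power_int)
  have nz: "z1 \<noteq> 0" "z2 \<noteq> 0" using n1 n2 by auto
  have "skew3 \<theta> a b (z1, z2, z3) = (e * z1, z1 powi a * z2, z2 powi b * z3)"
    by (simp add: skew3_def e_def)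
  also have "\<dots> = y"
    using e(1) nz unfolding w z3_def z2_def z1_def by (simp add: power_int_eq_0_iff)
  finally have "skew3 \<theta> a b (z1, z2, z3) = y" .
  moreover have "(z1, z2, z3) \<in> torus3" using n1 n2 n3 by (simp add: torus3_def)
  ultimately show ?thesis by blast
qed

lemma chi_skew: "x \<in> torus3 \<Longrightarrow> chi a b c (skew3 \<theta> m n x) =
   exp (2 * pi * \<i> * complex_of_real \<theta>) powi a * chi (a+m*b) (b+n*c) c x"
proof -
  assume x: "x \<in> torus3"
  obtain z1 z2 z3 where xe: "x = (z1,z2,z3)" by (cases x) auto
  have nz: "z1 \<noteq> 0" "z2 \<noteq> 0" "z3 \<noteq> 0" using x xe by (auto simp: torus3_def)
  have 1: "(z1 powi m * z2) powi b = z1 powi (m*b) * z2 powi b"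
    by (simp add: power_int_mult_distrib power_int_mult)
  have 2: "(z2 powi n * z3) powi c = z2 powi (n*c) * z3 powi c"
    by (simp add: power_int_mult_distrib power_int_mult)
  have 3: "z1 powi (a + m*b) = z1 powi a * z1 powi (m*b)" "z2 powi (b + n*c) = z2 powi b * z2 powi (n*c)"
    using nz by (simp_all add: power_int_add)
  have "chi a b c (skew3 \<theta> m n x) = (exp (2 * pi * \<i> * complex_of_real \<theta>) * z1) powi a * (z1 powi m * z2) powi b * (z2 powi n * z3) powi c"
    unfolding xe chi_def skew3_def by (simp only: case_prod_conv)
  also have "\<dots> = exp (2 * pi * \<i> * complex_of_real \<theta>) powi a * (z1 powi a * z1 powi (m*b)) * (z2 powi b * z2 powi (n*c)) * z3 powi c"
    unfolding power_int_mult_distrib power_int_mult[symmetric] by (simp only: mult_ac)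
  also have "\<dots> = exp (2 * pi * \<i> * complex_of_real \<theta>) powi a * chi (a+m*b) (b+n*c) c x"
    unfolding xe chi_def case_prod_conv 3 by (simp only: mult_ac)
  finally show ?thesis .
qed

lemma rep_chi_skew: "rep (\<lambda>x. chi a b c (skew3 \<theta> m n x)) (a+m*b) (b+n*c) c"
proof -
  have "rep (\<lambda>x. exp (2 * pi * \<i> * complex_of_real \<theta>) powi a * chi (a+m*b) (b+n*c) c x) (0 + (a+m*b)) (0+(b+n*c)) (0+c)"
    by (intro rep_mult rep_const rep_chi) simp
  hence "rep (\<lambda>x. exp (2 * pi * \<i> * complex_of_real \<theta>) powi a * chi (a+m*b) (b+n*c) c x) (a+m*b) (b+n*c) c"
    by simp
  thus ?thesis by (rule rep_cong) (simp add: chi_skew)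
qed



lemma per_nat:
  fixes \<phi> :: "real \<Rightarrow> 'a"
  assumes "\<And>x. \<phi> (x + p) = \<phi> x"
  shows "\<phi> (x + real j * p) = \<phi> x"
proof (induction j)
  case (Suc j)
  have "\<phi> (x + real (Suc j) * p) = \<phi> ((x + real j * p) + p)" by (simp add: algebra_simps)
  also have "\<dots> = \<phi> x" using assms Suc by simp
  finally show ?case .
qed simp

lemma per_int:
  fixes \<phi> :: "real \<Rightarrow> 'a"
  assumes "\<And>x. \<phi> (x + p) = \<phi> x"
  shows "\<phi> (x + of_int k * p) = \<phi> x"
proof (cases "k \<ge> 0")
  case True
  define j where "j = nat k"
  have "k = int j" using True by (simp add: j_def)
  thus ?thesis using per_nat[of \<phi> p x j, OF assms] by simp
next
  case False
  define j where "j = nat (-k)"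
  have k: "k = - int j" using False by (simp add: j_def)
  have "\<phi> x = \<phi> ((x - real j * p) + real j * p)" by simp
  also have "\<dots> = \<phi> (x - real j * p)" by (rule per_nat[of \<phi> p, OF assms])
  finally show ?thesis using k by simp
qed

lemma unit_arg: "norm z = 1 \<Longrightarrow> exp (\<i> * of_real (Arg z)) = z"
proof -
  assume n: "norm z = 1"
  hence "z \<noteq> 0" by auto
  from Arg_eq[OF this] n have "z = exp (\<i> * of_real (Arg z))" by simp
  thus ?thesis by (rule sym)
qed

lemma exp_i_eq: "exp (\<i> * of_real x) = exp (\<i> * of_real y) \<Longrightarrow> \<exists>k::int. x = y + 2*pi * of_int k"
proof -
  assume "exp (\<i> * of_real x) = exp (\<i> * of_real y)"
  then obtain n :: int where "\<i> * of_real x = \<i> * of_real y + (of_int (2 * n) * pi) * \<i>"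
    by (auto simp: exp_eq)
  hence "Im (\<i> * of_real x) = Im (\<i> * of_real y + (of_int (2 * n) * pi) * \<i>)" by simp
  hence "x = y + 2*pi * of_int n" by simp
  thus ?thesis by blast
qed

lemma argshift:
  assumes "norm w = 1" "norm z0 = 1"
  shows "\<exists>k::int. Arg (w / z0) + Arg z0 = Arg w + 2*pi * of_int k"
proof -
  have n: "norm (w / z0) = 1" using assms by (simp add: norm_divide)
  have "exp (\<i> * of_real (Arg (w / z0) + Arg z0)) = exp (\<i> * of_real (Arg (w / z0))) * exp (\<i> * of_real (Arg z0))"
    by (simp add: distrib_left exp_add)
  also have "\<dots> = w" using unit_arg[OF n] unit_arg[OF assms(2)] assms(2) by auto
  also have "\<dots> = exp (\<i> * of_real (Arg w))" using unit_arg[OF assms(1)] by simp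
  finally show ?thesis by (rule exp_i_eq)
qed

lemma exp_i_shift: "exp (\<i> * of_real (x + 2*pi * of_int k)) = exp (\<i> * of_real x)"
  by (subst exp_eq) (auto intro!: exI[of _ k] simp: algebra_simps)

lemma existence:
  assumes uc: "continuous_on torus3 u" and unz: "\<And>x. x \<in> torus3 \<Longrightarrow> u x \<noteq> 0"
  shows "\<exists>a b c. rep u a b c"
proof -
  define E where "E t = (exp (\<i> * of_real (fst t)), exp (\<i> * of_real (fst (snd t))), exp (\<i> * of_real (snd (snd t))))"
    for t :: "real \<times> real \<times> real"
  have ET: "E t \<in> torus3" for t by (simp add: E_def torus3_def)
  have Ec: "continuous_on UNIV E" unfolding E_def by (intro continuous_intros)
  have Uc: "continuous_on UNIV (\<lambda>t. u (E t))"
    by (rule continuous_on_compose2[OF uc Ec]) (use ET in auto)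
  have B: "Borsukian (UNIV :: (real \<times> real \<times> real) set)" by (rule convex_imp_Borsukian) simp
  have Pi: "(\<lambda>t. u (E t)) \<in> UNIV \<rightarrow> - {0}" using unz ET by auto
  have "\<exists>g. continuous_on UNIV g \<and> (\<forall>x \<in> UNIV. u (E x) = exp (g x))"
    using B Uc Pi unfolding Borsukian_continuous_logarithm by blast
  then obtain F where Fc: "continuous_on UNIV F" and F: "\<And>t. u (E t) = exp (F t)" by blast
  have per: "\<exists>a::int. \<forall>t. F (S t) = F t + 2 * pi * \<i> * of_int a"
    if Sc: "continuous_on UNIV S" and SE: "\<And>t. E (S t) = E t" for S
  proof -
    define D where "D t = F (S t) - F t" for t
    have Dc: "continuous_on UNIV D" unfolding D_def
      by (intro continuous_intros continuous_on_compose2[OF Fc Sc] Fc) auto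
    have De: "exp (D t) = 1" for t
      using F[of "S t"] F[of t] unz[OF ET[of t]] SE[of t] by (simp add: D_def exp_diff)
    have Dk: "D t = D 0" for t by (rule exp_one_const[OF connected_UNIV Dc De]) auto
    obtain k :: int where k: "Re (D 0) = 0" "Im (D 0) = of_int (2 * k) * pi"
      using De[of 0] by (auto simp: exp_eq_1)
    have "D 0 = 2 * pi * \<i> * of_int k" using k by (simp add: complex_eq_iff)
    thus ?thesis using Dk unfolding D_def by (intro exI[of _ k]) (auto simp: algebra_simps)
  qed
  have s2pi: "exp (\<i> * of_real (x + 2*pi)) = exp (\<i> * of_real x)" for x
    using exp_i_shift[of x 1] by simp
  have ES1: "E (fst t + 2*pi, snd t) = E t" for t unfolding E_def by (simp only: prod.sel s2pi)
  have ES2: "E (fst t, fst (snd t) + 2*pi, snd (snd t)) = E t" for t unfolding E_def by (simp only: prod.sel s2pi)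
  have ES3: "E (fst t, fst (snd t), snd (snd t) + 2*pi) = E t" for t unfolding E_def by (simp only: prod.sel s2pi)
  have "\<exists>a::int. \<forall>t. F (fst t + 2*pi, snd t) = F t + 2 * pi * \<i> * of_int a"
    by (rule per[OF _ ES1]) (intro continuous_intros)
  then obtain a1 :: int where a1: "\<And>t. F (fst t + 2*pi, snd t) = F t + 2 * pi * \<i> * of_int a1" by blast
  have "\<exists>a::int. \<forall>t. F (fst t, fst (snd t) + 2*pi, snd (snd t)) = F t + 2 * pi * \<i> * of_int a"
    by (rule per[OF _ ES2]) (intro continuous_intros)
  then obtain a2 :: int where a2: "\<And>t. F (fst t, fst (snd t) + 2*pi, snd (snd t)) = F t + 2 * pi * \<i> * of_int a2" by blast
  have "\<exists>a::int. \<forall>t. F (fst t, fst (snd t), snd (snd t) + 2*pi) = F t + 2 * pi * \<i> * of_int a"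
    by (rule per[OF _ ES3]) (intro continuous_intros)
  then obtain a3 :: int where a3: "\<And>t. F (fst t, fst (snd t), snd (snd t) + 2*pi) = F t + 2 * pi * \<i> * of_int a3" by blast
  define G where "G t = F t - \<i> * of_real (of_int a1 * fst t + of_int a2 * fst (snd t) + of_int a3 * snd (snd t))" for t
  have Gc: "continuous_on UNIV G" unfolding G_def by (intro continuous_intros Fc)
  have G1: "G (x + 2*pi, y, z) = G (x, y, z)" for x y z
    using a1[of "(x,y,z)"] by (simp add: G_def algebra_simps)
  have G2: "G (x, y + 2*pi, z) = G (x, y, z)" for x y z
    using a2[of "(x,y,z)"] by (simp add: G_def algebra_simps)
  have G3: "G (x, y, z + 2*pi) = G (x, y, z)" for x y z
    using a3[of "(x,y,z)"] by (simp add: G_def algebra_simps)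
  have Gk: "G (x + 2*pi * of_int k1, y + 2*pi * of_int k2, z + 2*pi * of_int k3) = G (x, y, z)" for x y z k1 k2 k3
  proof -
    have "G (x + 2*pi * of_int k1, y + 2*pi * of_int k2, z + 2*pi * of_int k3) = G (x, y + 2*pi * of_int k2, z + 2*pi * of_int k3)"
      using per_int[of "\<lambda>x. G (x, y + 2*pi * of_int k2, z + 2*pi * of_int k3)" "2*pi" x k1] G1 by (simp add: mult.commute)
    also have "\<dots> = G (x, y, z + 2*pi * of_int k3)"
      using per_int[of "\<lambda>y. G (x, y, z + 2*pi * of_int k3)" "2*pi" y k2] G2 by (simp add: mult.commute)
    also have "\<dots> = G (x, y, z)"
      using per_int[of "\<lambda>z. G (x, y, z)" "2*pi" z k3] G3 by (simp add: mult.commute)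
    finally show ?thesis .
  qed
  define Lf where "Lf w = G (Arg (fst w), Arg (fst (snd w)), Arg (snd (snd w)))" for w
  have rep_eq: "u w = chi a1 a2 a3 w * exp (Lf w)" if w: "w \<in> torus3" for w
  proof -
    obtain z1 z2 z3 where we: "w = (z1, z2, z3)" by (cases w) auto
    have n: "norm z1 = 1" "norm z2 = 1" "norm z3 = 1" using w we by (auto simp: torus3_def)
    have Ew: "E (Arg z1, Arg z2, Arg z3) = w" using n by (simp add: E_def we unit_arg)
    have "u w = exp (F (Arg z1, Arg z2, Arg z3))" using F[of "(Arg z1, Arg z2, Arg z3)"] Ew by simp
    also have "F (Arg z1, Arg z2, Arg z3) = Lf w + (of_int a1 * (\<i> * of_real (Arg z1)) + of_int a2 * (\<i> * of_real (Arg z2)) + of_int a3 * (\<i> * of_real (Arg z3)))"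
      by (simp add: Lf_def G_def we algebra_simps)
    also have "exp \<dots> = exp (Lf w) * (exp (\<i> * of_real (Arg z1)) powi a1 * exp (\<i> * of_real (Arg z2)) powi a2 * exp (\<i> * of_real (Arg z3)) powi a3)"
      by (simp add: exp_add exp_power_int)
    also have "\<dots> = chi a1 a2 a3 w * exp (Lf w)" using n by (simp add: unit_arg chi_def we)
    finally show ?thesis .
  qed
  have Lc: "continuous_on torus3 Lf"
    unfolding continuous_on_eq_continuous_within
  proof
    fix w0 assume w0: "w0 \<in> torus3"
    obtain z01 z02 z03 where we0: "w0 = (z01, z02, z03)" by (cases w0) auto
    have n0: "norm z01 = 1" "norm z02 = 1" "norm z03 = 1" using w0 we0 by (auto simp: torus3_def)
    define L where "L w = (Arg (fst w / z01) + Arg z01, Arg (fst (snd w) / z02) + Arg z02, Arg (snd (snd w) / z03) + Arg z03)" for w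
    have ac: "isCont (\<lambda>w. Arg (h w / z)) w0" if "isCont h w0" "h w0 = z" "z \<noteq> 0" for h :: "complex \<times> complex \<times> complex \<Rightarrow> complex" and z
    proof -
      have "isCont (\<lambda>w. h w / z) w0" using that by (intro continuous_intros)
      moreover have "isCont Arg (h w0 / z)" using that by (intro continuous_at_Arg) simp
      ultimately have "isCont (Arg \<circ> (\<lambda>w. h w / z)) w0" by (rule continuous_at_compose)
      thus ?thesis by (simp add: o_def)
    qed
    have Lcont: "isCont L w0" unfolding L_def
      by (intro continuous_intros ac) (use n0 we0 in auto)
    have Gcont: "isCont G (L w0)" using Gc continuous_on_eq_continuous_at[OF open_UNIV, of G] by blast
    have "isCont (G \<circ> L) w0" by (rule continuous_at_compose[OF Lcont Gcont])
    hence c1: "continuous (at w0 within torus3) (G \<circ> L)" by (rule continuous_at_imp_continuous_at_within)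
    have eq: "(G \<circ> L) w = Lf w" if w: "w \<in> torus3" for w
    proof -
      obtain z1 z2 z3 where we: "w = (z1, z2, z3)" by (cases w) auto
      have n: "norm z1 = 1" "norm z2 = 1" "norm z3 = 1" using w we by (auto simp: torus3_def)
      obtain k1 where k1: "Arg (z1 / z01) + Arg z01 = Arg z1 + 2*pi * of_int k1" using argshift[OF n(1) n0(1)] by blast
      obtain k2 where k2: "Arg (z2 / z02) + Arg z02 = Arg z2 + 2*pi * of_int k2" using argshift[OF n(2) n0(2)] by blast
      obtain k3 where k3: "Arg (z3 / z03) + Arg z03 = Arg z3 + 2*pi * of_int k3" using argshift[OF n(3) n0(3)] by blast
      show ?thesis by (simp add: L_def Lf_def we k1 k2 k3 Gk)
    qed
    show "continuous (at w0 within torus3) Lf"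
      by (rule continuous_transform_within_openin[OF c1 openin_subtopology_self w0 eq])
  qed
  show ?thesis unfolding rep_def using Lc rep_eq by blast
qed



lemma arith_final:
  fixes m n p11 p12 p13 p22 p23 p32 p33 q21 q22 q23 q31 q32 q33 :: int
  assumes "0 < m" "m < n" "p12 = 0" "p13 = 0" "p23 = 0" "p11 = p33"
    "m * p22 = n * p11 \<or> m * p22 = - (n * p11)"
    "q31 * p13 + q32 * p23 + q33 * p33 = 1"
    "q21 * p13 + q22 * p23 + q23 * p33 = 0"
    "q21 * p12 + q22 * p22 + q23 * p32 = 1"
  shows False
proof -
  have "p33 * q33 = 1" using assms by (simp add: mult.commute)
  hence a33: "\<bar>p33\<bar> = 1" using abs_zmult_eq_1[of p33 q33] by simp
  have "q23 = 0" using assms a33 by auto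
  hence "p22 * q22 = 1" using assms by (simp add: mult.commute)
  hence a22: "\<bar>p22\<bar> = 1" using abs_zmult_eq_1[of p22 q22] by simp
  have "\<bar>m * p22\<bar> = \<bar>n * p11\<bar>" using assms(7) by auto
  hence "m = n" using a22 a33 assms by (simp add: abs_mult)
  thus False using assms by simp
qed

lemma lin:
  assumes r1: "rep (\<lambda>x. fst (g x)) p11 p12 p13"
    and r2: "rep (\<lambda>x. fst (snd (g x))) p21 p22 p23"
    and r3: "rep (\<lambda>x. snd (snd (g x))) p31 p32 p33"
  shows "rep (\<lambda>x. chi a b c (g x)) (a*p11 + b*p21 + c*p31) (a*p12 + b*p22 + c*p32) (a*p13 + b*p23 + c*p33)"
proof -
  have "rep (\<lambda>x. fst (g x) powi a * fst (snd (g x)) powi b * snd (snd (g x)) powi c)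
     (a*p11 + b*p21 + c*p31) (a*p12 + b*p22 + c*p32) (a*p13 + b*p23 + c*p33)"
    by (intro rep_mult rep_powi r1 r2 r3)
  thus ?thesis by (rule rep_cong) (simp add: chi_def split_beta)
qed

lemma main_case:
  fixes g g' :: "complex \<times> complex \<times> complex \<Rightarrow> complex \<times> complex \<times> complex" and m n :: int
  assumes hom: "homeomorphism torus3 torus3 g g'" and mn: "0 < m" "m < n"
    and rel: "(\<forall>x\<in>torus3. skew3 \<theta> n m (g x) = g (skew3 \<theta> m n x)) \<or>
              (\<forall>x\<in>torus3. skew3 \<theta> n m (g (skew3 \<theta> m n x)) = g x)"
  shows False
proof -
  have gc: "continuous_on torus3 g" and gT: "g ` torus3 = torus3" and g'c: "continuous_on torus3 g'"
    and g'T: "g' ` torus3 = torus3" and gg': "\<And>x. x \<in> torus3 \<Longrightarrow> g' (g x) = x"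
    using hom unfolding homeomorphism_def by auto
  have gT': "g ` torus3 \<subseteq> torus3" "g' ` torus3 \<subseteq> torus3" using gT g'T by auto
  have gx: "g x \<in> torus3" if "x \<in> torus3" for x using gT that by blast
  have g'x: "g' x \<in> torus3" if "x \<in> torus3" for x using g'T that by blast
  have cfst: "continuous_on torus3 (\<lambda>x. fst (G x))" "continuous_on torus3 (\<lambda>x. fst (snd (G x)))"
     "continuous_on torus3 (\<lambda>x. snd (snd (G x)))" if "continuous_on torus3 G" for G
    using that by (auto intro!: continuous_intros)
  have nfst: "fst (G x) \<noteq> 0" "fst (snd (G x)) \<noteq> 0" "snd (snd (G x)) \<noteq> 0"
    if "G ` torus3 \<subseteq> torus3" "x \<in> torus3" for G x
    using that torus3_nz[of "G x"] by auto
  obtain p11 p12 p13 where r1: "rep (\<lambda>x. fst (g x)) p11 p12 p13"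
    using existence[OF cfst(1)[OF gc]] nfst(1)[OF gT'(1)] by blast
  obtain p21 p22 p23 where r2: "rep (\<lambda>x. fst (snd (g x))) p21 p22 p23"
    using existence[OF cfst(2)[OF gc]] nfst(2)[OF gT'(1)] by blast
  obtain p31 p32 p33 where r3: "rep (\<lambda>x. snd (snd (g x))) p31 p32 p33"
    using existence[OF cfst(3)[OF gc]] nfst(3)[OF gT'(1)] by blast
  obtain q21 q22 q23 where s2: "rep (\<lambda>x. fst (snd (g' x))) q21 q22 q23"
    using existence[OF cfst(2)[OF g'c]] nfst(2)[OF gT'(2)] by blast
  obtain q31 q32 q33 where s3: "rep (\<lambda>x. snd (snd (g' x))) q31 q32 q33"
    using existence[OF cfst(3)[OF g'c]] nfst(3)[OF gT'(2)] by blast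
  note L = lin[OF r1 r2 r3]
  have "rep (\<lambda>x. fst (snd (g' (g x)))) (q21*p11 + q22*p21 + q23*p31) (q21*p12 + q22*p22 + q23*p32) (q21*p13 + q22*p23 + q23*p33)"
    by (rule rep_comp[OF s2 gc gT'(1) L])
  moreover have "rep (\<lambda>x. fst (snd (g' (g x)))) 0 1 0"
    by (rule rep_cong[OF rep_chi]) (simp add: gg' chi_def split_beta)
  ultimately have Q2: "q21*p13 + q22*p23 + q23*p33 = 0" "q21*p12 + q22*p22 + q23*p32 = 1"
    using rep_unique by blast+
  have "rep (\<lambda>x. snd (snd (g' (g x)))) (q31*p11 + q32*p21 + q33*p31) (q31*p12 + q32*p22 + q33*p32) (q31*p13 + q32*p23 + q33*p33)"
    by (rule rep_comp[OF s3 gc gT'(1) L])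
  moreover have "rep (\<lambda>x. snd (snd (g' (g x)))) 0 0 1"
    by (rule rep_cong[OF rep_chi]) (simp add: gg' chi_def split_beta)
  ultimately have Q3: "q31*p13 + q32*p23 + q33*p33 = 1"
    using rep_unique by blast+
  have RK: "rep (\<lambda>x. chi a b c (skew3 \<theta> n m (g x)))
      ((a + n*b)*p11 + (b + m*c)*p21 + c*p31) ((a + n*b)*p12 + (b + m*c)*p22 + c*p32) ((a + n*b)*p13 + (b + m*c)*p23 + c*p33)" for a b c
    by (rule rep_comp[OF rep_chi_skew gc gT'(1) L])
  have RH: "rep (\<lambda>x. chi a b c (g (skew3 \<theta> m n x)))
      ((a*p11 + b*p21 + c*p31) + m*(a*p12 + b*p22 + c*p32)) ((a*p12 + b*p22 + c*p32) + n*(a*p13 + b*p23 + c*p33)) (a*p13 + b*p23 + c*p33)" for a b c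
    by (rule rep_comp[OF L skew_cont skew_T' rep_chi_skew])
  have RKH: "rep (\<lambda>x. chi a b c (skew3 \<theta> n m (g (skew3 \<theta> m n x))))
      (((a + n*b)*p11 + (b + m*c)*p21 + c*p31) + m*((a + n*b)*p12 + (b + m*c)*p22 + c*p32))
      (((a + n*b)*p12 + (b + m*c)*p22 + c*p32) + n*((a + n*b)*p13 + (b + m*c)*p23 + c*p33))
      ((a + n*b)*p13 + (b + m*c)*p23 + c*p33)" for a b c
    by (rule rep_comp[OF RK skew_cont skew_T' rep_chi_skew])
  from rel show False
  proof
    assume r: "\<forall>x\<in>torus3. skew3 \<theta> n m (g x) = g (skew3 \<theta> m n x)"
    have eq: "rep (\<lambda>x. chi a b c (skew3 \<theta> n m (g x)))
      ((a*p11 + b*p21 + c*p31) + m*(a*p12 + b*p22 + c*p32)) ((a*p12 + b*p22 + c*p32) + n*(a*p13 + b*p23 + c*p33)) (a*p13 + b*p23 + c*p33)" for a b c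
      by (rule rep_cong[OF RH]) (simp add: r)
    note E1 = rep_unique[OF RK[of 1 0 0] eq[of 1 0 0]]
    note E2 = rep_unique[OF RK[of 0 1 0] eq[of 0 1 0]]
    note E3 = rep_unique[OF RK[of 0 0 1] eq[of 0 0 1]]
    have "p12 = 0" "p13 = 0" using E1 mn by auto
    moreover have "p23 = 0" "n * p11 = m * p22" using E2 mn \<open>p12 = 0\<close> \<open>p13 = 0\<close> by auto
    moreover have "m * p22 = n * p33" using E3 mn \<open>p23 = 0\<close> by (auto simp: algebra_simps)
    ultimately show False using arith_final[OF mn, of p12 p13 p23 p11 p33 p22 q31 q32 q33 q21 q22 q23 p32] Q2 Q3 mn
      by auto
  next
    assume r: "\<forall>x\<in>torus3. skew3 \<theta> n m (g (skew3 \<theta> m n x)) = g x"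
    have eq: "rep (\<lambda>x. chi a b c (skew3 \<theta> n m (g (skew3 \<theta> m n x)))) (a*p11 + b*p21 + c*p31) (a*p12 + b*p22 + c*p32) (a*p13 + b*p23 + c*p33)" for a b c
      by (rule rep_cong[OF L]) (simp add: r)
    note E1 = rep_unique[OF RKH[of 1 0 0] eq[of 1 0 0]]
    note E2 = rep_unique[OF RKH[of 0 1 0] eq[of 0 1 0]]
    note E3 = rep_unique[OF RKH[of 0 0 1] eq[of 0 0 1]]
    have "p12 = 0" "p13 = 0" using E1 mn by auto
    moreover have "p23 = 0" "n * p11 = - (m * p22)" using E2 mn \<open>p12 = 0\<close> \<open>p13 = 0\<close> by (auto simp: algebra_simps)
    moreover have "m * p22 = - (n * p33)" using E3 mn \<open>p23 = 0\<close> by (auto simp: algebra_simps)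
    ultimately show False using arith_final[OF mn, of p12 p13 p23 p11 p33 p22 q31 q32 q33 q21 q22 q23 p32] Q2 Q3 mn
      by auto
  qed
qed


theorem mainTheorem3:
  fixes \<theta> :: real and m n :: int
  assumes "0 \<le> \<theta>" "\<theta> \<le> 1" "\<theta> \<notin> \<rat>"
    and "0 < m" "m < n"
  shows "\<not> flip_conjugate_on torus3 (skew3 \<theta> m n) torus3 (skew3 \<theta> n m)"
proof
  assume "flip_conjugate_on torus3 (skew3 \<theta> m n) torus3 (skew3 \<theta> n m)"
  then consider (a) g g' where "homeomorphism torus3 torus3 g g'"
      "\<forall>y\<in>torus3. g (skew3 \<theta> m n (g' y)) = skew3 \<theta> n m y"
    | (b) g g' where "homeomorphism torus3 torus3 g g'"
      "\<forall>y\<in>torus3. g (skew3 \<theta> m n (g' y)) = inv_into torus3 (skew3 \<theta> n m) y"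
    unfolding flip_conjugate_on_def conjugate_on_def by blast
  then show False
  proof cases
    case a
    have gT: "g ` torus3 = torus3" and gg': "\<And>x. x \<in> torus3 \<Longrightarrow> g' (g x) = x"
      using a(1) unfolding homeomorphism_def by auto
    have "\<forall>x\<in>torus3. skew3 \<theta> n m (g x) = g (skew3 \<theta> m n x)"
    proof
      fix x assume x: "x \<in> torus3"
      have "g x \<in> torus3" using gT x by blast
      thus "skew3 \<theta> n m (g x) = g (skew3 \<theta> m n x)" using a(2) gg'[OF x] by metis
    qed
    thus False using main_case[OF a(1) assms(4,5)] by blast
  next
    case b
    have gT: "g ` torus3 = torus3" and gg': "\<And>x. x \<in> torus3 \<Longrightarrow> g' (g x) = x"
      using b(1) unfolding homeomorphism_def by auto
    have "\<forall>x\<in>torus3. skew3 \<theta> n m (g (skew3 \<theta> m n x)) = g x"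
    proof
      fix x assume x: "x \<in> torus3"
      have gx: "g x \<in> torus3" using gT x by blast
      hence "g x \<in> skew3 \<theta> n m ` torus3" using skew_surj[OF gx, of \<theta> n m] by (metis image_eqI)
      hence "skew3 \<theta> n m (inv_into torus3 (skew3 \<theta> n m) (g x)) = g x" by (rule f_inv_into_f)
      thus "skew3 \<theta> n m (g (skew3 \<theta> m n x)) = g x" using b(2) gx gg'[OF x] by metis
    qed
    thus False using main_case[OF b(1) assms(4,5)] by blast
  qed
qed

end
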